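(* Let $\lambda\in\mathbb R$ with $\alpha=1-\lambda>0$, and let $\mathcal Q_\lambda$ be a $\lambda$-exponential family satisfying Assumptions A and B. Let $x_1,\dots,x_N\in\mathcal X$ be data such that $x_i\in S_\vartheta$ for all $i$ and all $\vartheta\in\operatorname{dom}\varphi_\lambda$. Set $\bar T=\frac1N\sum_{i=1}^NT(x_i)$ and suppose there exists $\vartheta_*\in\operatorname{dom}\varphi_\lambda$ with $q^{(\alpha)}_{\vartheta_*}(T)=\bar T$. Let $\ell(\vartheta)=\sum_{i=1}^N\log q_\vartheta(x_i)$. (i) If $\lambda=0$, $\vartheta_*$ maximizes $\ell$ over $\operatorname{dom}\varphi_\lambda$. (ii) If $\lambda<0$, $\vartheta_*$ maximizes over $\operatorname{dom}\varphi_\lambda$ the function $\vartheta\mapsto N\big(c_\lambda(\vartheta,\bar T)-\varphi_\lambda(\vartheta)\big)$, which is a lower bound of $\ell$ on $\operatorname{dom}\varphi_\lambda$; moreover $\frac1N\sum_{i=1}^N\log q_{\vartheta_*}(x_i)\ge\psi_\lambda(\vartheta_* )$. (iii) If $\lambda>0$, $\vartheta_*$ maximizes over $\operatorname{dom}\varphi_\lambda$ the function $\vartheta\mapsto N\big(c_\lambda(\vartheta,\bar T)-\varphi_\lambda(\vartheta)\big)$, which is an upper bound of $\ell$ on $\operatorname{dom}\varphi_\lambda$; moreover $\frac1N\sum_{i=1}^N\log q_\vartheta(x_i)\le\psi_\lambda(\vartheta_* )$ for all $\vartheta\in\operatorname{dom}\varphi_\lambda$.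
   Context: $\mathcal H$ is a finite-dimensional real Hilbert space; $\mathcal X$ a measurable space with measure $m$; $p(f)=\int fp\,dm$. Conventions $\log s=-\infty$ for $s\le0$, $\exp(-\infty)=0$. Coupling $c_\lambda(u,v)=\frac1\lambda\log(1+\lambda\langle u,v\rangle)$ ($\lambda\ne0$), $c_0=\langle\cdot,\cdot\rangle$. For measurable $T:\mathcal X\to\mathcal H$: $\varphi_\lambda(\vartheta)=\log\int\exp(c_\lambda(\vartheta,T))dm$, $\operatorname{dom}\varphi_\lambda=\{\varphi_\lambda<+\infty\}$, $q_\vartheta=\exp(c_\lambda(\vartheta,T)-\varphi_\lambda(\vartheta))$, $\mathcal Q_\lambda=\{q_\vartheta:\vartheta\in\operatorname{dom}\varphi_\lambda\}$, support $S_\vartheta=\{x:1+\lambda\langle\vartheta,T(x)\rangle>0\}$. Escort $p^{(\alpha)}=p^\alpha/\int p^\alpha dm$; $p_{|Y}=p\mathbf 1_Y$. Rényi entropy $H_\alpha(p)=\frac1{1-\alpha}\log\int p^\alpha dm$ ($\alpha\ne1$), $H_1(p)=-\int p\log p\,dm$; $\psi_\lambda(\vartheta)=-H_\alpha(q_\vartheta)$. Compatibility: $p$ is $q_\vartheta$-compatible if $\int p_{|S_\vartheta}^\alpha dm\in(0,\infty)$ and $\int Tp_{|S_\vartheta}^\alpha dm$ has finite components; $\mathcal Q_\lambda$-compatible if for every $\vartheta\in\operatorname{dom}\varphi_\lambda$. Assumption A: $\alpha>0$ and $\varphi_\lambda$ proper (never $-\infty$, nonempty domain). Assumption B: there is a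 nonempty $S_\lambda$ with $S_\vartheta=S_\lambda$ for all $\vartheta\in\operatorname{dom}\varphi_\lambda$, and each $q_\vartheta\in\mathcal Q_\lambda$ is $\mathcal Q_\lambda$-compatible. *)

theory Defs
  imports "HOL-Probability.Probability"
begin

definition elog :: "real \<Rightarrow> ereal" where
  "elog s = (if s > 0 then ereal (ln s) else -\<infinity>)"

text \<open>Exponential with exp(-infinity) = 0 (the value at +infinity is never used).\<close>
definition eexp :: "ereal \<Rightarrow> real" where
  "eexp x = (case x of ereal r \<Rightarrow> exp r | _ \<Rightarrow> 0)"

definition coupling :: "real \<Rightarrow> 'h::real_inner \<Rightarrow> 'h \<Rightarrow> ereal" where
  "coupling lam u v =
     (if lam = 0 then ereal (inner u v)
      else if 1 + lam * inner u v > 0 then ereal (ln (1 + lam * inner u v) / lam)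
      else -\<infinity>)"

definition phi :: "real \<Rightarrow> 'a measure \<Rightarrow> ('a \<Rightarrow> 'h::real_inner) \<Rightarrow> 'h \<Rightarrow> ereal" where
  "phi lam M T \<theta> =
     (let Z = (\<integral>\<^sup>+ x. ennreal (eexp (coupling lam \<theta> (T x))) \<partial>M)
      in if Z = \<infinity> then \<infinity> else elog (enn2real Z))"

definition dom_phi :: "real \<Rightarrow> 'a measure \<Rightarrow> ('a \<Rightarrow> 'h::real_inner) \<Rightarrow> 'h set" where
  "dom_phi lam M T = {\<theta>. phi lam M T \<theta> < \<infinity>}"

definition qdens :: "real \<Rightarrow> 'a measure \<Rightarrow> ('a \<Rightarrow> 'h::real_inner) \<Rightarrow> 'h \<Rightarrow> 'a \<Rightarrow> real" where
  "qdens lam M T \<theta> x = eexp (coupling lam \<theta> (T x) - phi lam M T \<theta>)"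

definition supp :: "real \<Rightarrow> ('a \<Rightarrow> 'h::real_inner) \<Rightarrow> 'h \<Rightarrow> 'a set" where
  "supp lam T \<theta> = {x. 1 + lam * inner \<theta> (T x) > 0}"

text \<open>p(f) = integral of f p dm.\<close>
definition expect :: "'a measure \<Rightarrow> ('a \<Rightarrow> real) \<Rightarrow> ('a \<Rightarrow> 'h::euclidean_space) \<Rightarrow> 'h" where
  "expect M p f = (\<integral>x. p x *\<^sub>R f x \<partial>M)"

definition escort :: "real \<Rightarrow> 'a measure \<Rightarrow> ('a \<Rightarrow> real) \<Rightarrow> 'a \<Rightarrow> real" where
  "escort \<alpha> M p = (\<lambda>x. p x powr \<alpha> / enn2real (\<integral>\<^sup>+ y. ennreal (p y powr \<alpha>) \<partial>M))"

definition restr :: "('a \<Rightarrow> real) \<Rightarrow> 'a set \<Rightarrow> 'a \<Rightarrow> real" where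
  "restr p Y = (\<lambda>x. p x * indicator Y x)"

text \<open>Renyi entropy (real valued; the integrals are finite under compatibility).\<close>
definition renyi :: "real \<Rightarrow> 'a measure \<Rightarrow> ('a \<Rightarrow> real) \<Rightarrow> real" where
  "renyi \<alpha> M p =
     (if \<alpha> = 1 then - (\<integral>x. p x * ln (p x) \<partial>M)
      else ln (enn2real (\<integral>\<^sup>+ x. ennreal (p x powr \<alpha>) \<partial>M)) / (1 - \<alpha>))"

definition psi :: "real \<Rightarrow> 'a measure \<Rightarrow> ('a \<Rightarrow> 'h::real_inner) \<Rightarrow> 'h \<Rightarrow> real" where
  "psi lam M T \<theta> = - renyi (1 - lam) M (qdens lam M T \<theta>)"

definition compatible ::
  "real \<Rightarrow> 'a measure \<Rightarrow> ('a \<Rightarrow> 'h::euclidean_space) \<Rightarrow> ('a \<Rightarrow> real) \<Rightarrow> 'h \<Rightarrow> bool" where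
  "compatible lam M T p \<theta> \<longleftrightarrow>
     (let \<alpha> = 1 - lam; pS = restr p (supp lam T \<theta>) in
       0 < (\<integral>\<^sup>+ x. ennreal (pS x powr \<alpha>) \<partial>M) \<and>
       (\<integral>\<^sup>+ x. ennreal (pS x powr \<alpha>) \<partial>M) < \<infinity> \<and>
       (\<forall>b\<in>Basis. integrable M (\<lambda>x. pS x powr \<alpha> * inner (T x) b)))"

definition family_compatible ::
  "real \<Rightarrow> 'a measure \<Rightarrow> ('a \<Rightarrow> 'h::euclidean_space) \<Rightarrow> ('a \<Rightarrow> real) \<Rightarrow> bool" where
  "family_compatible lam M T p \<longleftrightarrow> (\<forall>\<theta>\<in>dom_phi lam M T. compatible lam M T p \<theta>)"

definition assumption_A :: "real \<Rightarrow> 'a measure \<Rightarrow> ('a \<Rightarrow> 'h::real_inner) \<Rightarrow> bool" where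
  "assumption_A lam M T \<longleftrightarrow> 1 - lam > 0 \<and>
     (\<forall>\<theta>. phi lam M T \<theta> \<noteq> -\<infinity>) \<and> dom_phi lam M T \<noteq> {}"

definition assumption_B :: "real \<Rightarrow> 'a measure \<Rightarrow> ('a \<Rightarrow> 'h::euclidean_space) \<Rightarrow> bool" where
  "assumption_B lam M T \<longleftrightarrow>
     (\<exists>S. S \<noteq> {} \<and> (\<forall>\<theta>\<in>dom_phi lam M T. supp lam T \<theta> = S)) \<and>
     (\<forall>\<theta>\<in>dom_phi lam M T. family_compatible lam M T (qdens lam M T \<theta>))"

end

theory Submission imports Defs begin

lemma g_formula:
  "eexp (coupling lam \<theta> v) = (if lam = 0 then exp (\<theta> \<bullet> v)
     else if 1 + lam * (\<theta> \<bullet> v) > 0 then (1 + lam * (\<theta> \<bullet> v)) powr (1 / lam) else 0)"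
  by (auto simp: coupling_def eexp_def powr_def)

lemma g_nonneg: "eexp (coupling lam \<theta> v) \<ge> 0"
  by (auto simp: coupling_def eexp_def)

lemma g_meas:
  fixes T :: "'a \<Rightarrow> 'h::euclidean_space"
  assumes [measurable]: "T \<in> borel_measurable M"
  shows "(\<lambda>x. eexp (coupling lam \<theta> (T x))) \<in> borel_measurable M"
  unfolding g_formula by (cases "lam = 0") simp_all

lemma phi_dom:
  fixes T :: "'a \<Rightarrow> 'h::euclidean_space"
  assumes Tm: "T \<in> borel_measurable M" and d: "\<theta> \<in> dom_phi lam M T"
    and ninf: "phi lam M T \<theta> \<noteq> -\<infinity>"
  shows "integrable M (\<lambda>x. eexp (coupling lam \<theta> (T x)))"
    and "(\<integral>x. eexp (coupling lam \<theta> (T x)) \<partial>M) > 0"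
    and "phi lam M T \<theta> = ereal (ln (\<integral>x. eexp (coupling lam \<theta> (T x)) \<partial>M))"
proof -
  let ?g = "\<lambda>x. eexp (coupling lam \<theta> (T x))"
  define Z where "Z = (\<integral>\<^sup>+ x. ennreal (?g x) \<partial>M)"
  have ph: "phi lam M T \<theta> = (if Z = \<infinity> then \<infinity> else elog (enn2real Z))"
    by (simp add: phi_def Z_def Let_def)
  have Zf: "Z \<noteq> \<infinity>" using d ph by (auto simp: dom_phi_def)
  have eq: "(\<integral>x. ?g x \<partial>M) = enn2real Z"
    unfolding Z_def by (rule integral_eq_nn_integral) (auto intro: g_meas[OF Tm] g_nonneg)
  have pos: "enn2real Z > 0" using ninf ph Zf by (auto simp: elog_def split: if_splits)
  show "integrable M ?g"
    by (rule integrableI_nn_integral_finite[where x="enn2real Z"])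
       (use Zf in \<open>auto intro: g_meas[OF Tm] g_nonneg simp: Z_def[symmetric] less_top[symmetric] ennreal_enn2real\<close>)
  show "(\<integral>x. ?g x \<partial>M) > 0" using eq pos by simp
  show "phi lam M T \<theta> = ereal (ln (\<integral>x. ?g x \<partial>M))"
    using ph Zf pos eq by (simp add: elog_def)
qed

lemma qdens_eq:
  assumes "phi lam M T \<theta> = ereal (ln I)" "I > 0"
  shows "qdens lam M T \<theta> x = eexp (coupling lam \<theta> (T x)) / I"
  using assms
  by (auto simp: qdens_def coupling_def eexp_def exp_diff)

lemma moment_lemma:
  fixes T :: "'a \<Rightarrow> 'h::euclidean_space" and W :: "'a \<Rightarrow> real"
  assumes Tm[measurable]: "T \<in> borel_measurable M"
    and comp: "\<forall>b\<in>Basis. integrable M (\<lambda>x. W x * (T x \<bullet> b))"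
    and mom: "expect M (\<lambda>x. W x / Z) T = Tb" and Z: "Z > 0"
  shows "integrable M (\<lambda>x. W x * (v \<bullet> T x))"
    and "(\<integral>x. W x * (v \<bullet> T x) \<partial>M) = Z * (v \<bullet> Tb)"
proof -
  have rep: "W x *\<^sub>R T x = (\<Sum>b\<in>Basis. (W x * (T x \<bullet> b)) *\<^sub>R b)" for x
    by (subst euclidean_representation[symmetric, of "T x"])
       (simp add: scaleR_sum_right)
  have ci: "integrable M (\<lambda>x. (W x * (T x \<bullet> b)) *\<^sub>R b)" if "b \<in> Basis" for b
    using comp that by auto
  have vi: "integrable M (\<lambda>x. W x *\<^sub>R T x)"
    unfolding rep using ci by (rule Bochner_Integration.integrable_sum)
  have eq1: "W x * (v \<bullet> T x) = v \<bullet> (W x *\<^sub>R T x)" for x by simp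
  show "integrable M (\<lambda>x. W x * (v \<bullet> T x))"
    unfolding eq1 using vi by (rule integrable_inner_right)
  have "expect M (\<lambda>x. W x / Z) T = (1 / Z) *\<^sub>R (\<integral>x. W x *\<^sub>R T x \<partial>M)"
    unfolding expect_def by (simp add: divide_inverse mult.commute flip: scaleR_scaleR)
  then have "(\<integral>x. W x *\<^sub>R T x \<partial>M) = Z *\<^sub>R Tb" using mom Z by (auto simp: field_simps)
  then show "(\<integral>x. W x * (v \<bullet> T x) \<partial>M) = Z * (v \<bullet> Tb)"
    unfolding eq1 using vi by (subst integral_inner_right) auto
qed

lemma powr_tangent:
  fixes p s t :: real
  assumes p: "p \<ge> 1 \<or> p \<le> 0" and s: "s > 0" and t: "t > 0"
  shows "s powr p \<ge> t powr p + p * t powr (p - 1) * (s - t)"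
proof -
  have cv: "convex_on {0<..} (\<lambda>x::real. x powr p)"
  proof (rule f''_ge0_imp_convex[where f'="\<lambda>x. p * x powr (p - 1)" and f''="\<lambda>x. p * (p - 1) * x powr (p - 2)"])
    show "convex ({0<..} :: real set)" by simp
    fix x :: real assume x: "x \<in> {0<..}"
    then show "((\<lambda>x. x powr p) has_real_derivative p * x powr (p - 1)) (at x)"
      by (auto intro!: derivative_eq_intros)
    show "((\<lambda>x. p * x powr (p - 1)) has_real_derivative p * (p - 1) * x powr (p - 2)) (at x)"
      using x by (auto intro!: derivative_eq_intros simp: algebra_simps)
    have "p * (p - 1) \<ge> 0" using p by (auto simp: mult_nonpos_nonpos)
    then show "p * (p - 1) * x powr (p - 2) \<ge> 0" by simp
  qed
  have "s powr p - t powr p \<ge> p * t powr (p - 1) * (s - t)"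
    by (rule convex_on_imp_above_tangent[OF cv]) (use s t in \<open>auto simp: interior_open intro!: derivative_eq_intros\<close>)
  then show ?thesis by simp
qed

lemma tangent_mult:
  fixes p u us t :: real
  assumes p: "p \<ge> 1 \<or> p \<le> 0" and u: "u > 0" and us: "us > 0" and t: "t > 0"
  shows "u powr p \<ge> t powr p * us powr p + p * t powr (p - 1) * us powr (p - 1) * (u - t * us)"
proof -
  have h: "(u / us) powr p \<ge> t powr p + p * t powr (p - 1) * (u / us - t)"
    using powr_tangent[OF p _ t, of "u / us"] u us by simp
  have e1: "us powr p * (u / us) powr p = u powr p"
    using u us by (simp add: powr_divide)
  have e2: "us powr p * (u / us - t) = us powr (p - 1) * (u - t * us)"
    using us by (simp add: powr_diff field_simps)
  have "us powr p * (t powr p + p * t powr (p - 1) * (u / us - t))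
      \<le> us powr p * (u / us) powr p"
    using h us by (intro mult_left_mono) auto
  also have "us powr p * (t powr p + p * t powr (p - 1) * (u / us - t))
      = t powr p * us powr p + p * t powr (p - 1) * (us powr p * (u / us - t))"
    by (simp add: algebra_simps)
  finally show ?thesis unfolding e1 e2 by (simp add: mult.assoc)
qed

lemma ln_sum_le:
  fixes u :: "'i \<Rightarrow> real"
  assumes K: "finite K" "K \<noteq> {}" and pos: "\<And>i. i \<in> K \<Longrightarrow> u i > 0"
  shows "(\<Sum>i\<in>K. ln (u i)) \<le> real (card K) * ln ((\<Sum>i\<in>K. u i) / real (card K))"
proof -
  define a where "a = (\<Sum>i\<in>K. u i) / real (card K)"
  have cK: "real (card K) > 0" using K by auto
  have sp: "(\<Sum>i\<in>K. u i) > 0" using K pos by (intro sum_pos) auto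
  then have a: "a > 0" unfolding a_def using cK by simp
  have "ln (u i) - ln a \<le> u i / a - 1" if "i \<in> K" for i
    using ln_le_minus_one[of "u i / a"] pos[OF that] a by (simp add: ln_div)
  then have "(\<Sum>i\<in>K. ln (u i) - ln a) \<le> (\<Sum>i\<in>K. u i / a - 1)"
    by (rule sum_mono)
  also have "\<dots> = (\<Sum>i\<in>K. u i) / a - real (card K)"
    by (simp add: sum_subtractf sum_divide_distrib)
  also have "\<dots> = 0" using sp cK unfolding a_def by simp
  finally show ?thesis unfolding a_def[symmetric] by (simp add: sum_subtractf)
qed

theorem proposition10:
  fixes lam :: real and M :: "'a measure" and T :: "'a \<Rightarrow> 'h::euclidean_space"
    and N :: nat and xs :: "nat \<Rightarrow> 'a" and \<theta>s :: 'h
  defines "Tbar \<equiv> (1 / real N) *\<^sub>R (\<Sum>i<N. T (xs i))"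
    and "ell \<equiv> (\<lambda>\<theta>. \<Sum>i<N. ln (qdens lam M T \<theta> (xs i)))"
    and "F \<equiv> (\<lambda>\<theta>. ereal (real N) * (coupling lam \<theta> ((1 / real N) *\<^sub>R (\<Sum>i<N. T (xs i))) - phi lam M T \<theta>))"
  assumes T_meas: "T \<in> borel_measurable M"
    and alpha_pos: "1 - lam > 0"
    and A: "assumption_A lam M T"
    and B: "assumption_B lam M T"
    and N_pos: "N > 0"
    and data: "\<forall>i<N. xs i \<in> space M"
    and data_supp: "\<forall>i<N. \<forall>\<theta>\<in>dom_phi lam M T. xs i \<in> supp lam T \<theta>"
    and \<theta>s_dom: "\<theta>s \<in> dom_phi lam M T"
    and moment: "expect M (escort (1 - lam) M (qdens lam M T \<theta>s)) T = Tbar"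
  shows "(lam = 0 \<longrightarrow> (\<forall>\<theta>\<in>dom_phi lam M T. ell \<theta> \<le> ell \<theta>s))
       \<and> (lam < 0 \<longrightarrow>
            (\<forall>\<theta>\<in>dom_phi lam M T. F \<theta> \<le> F \<theta>s) \<and>
            (\<forall>\<theta>\<in>dom_phi lam M T. F \<theta> \<le> ereal (ell \<theta>)) \<and>
            ell \<theta>s / real N \<ge> psi lam M T \<theta>s)
       \<and> (lam > 0 \<longrightarrow>
            (\<forall>\<theta>\<in>dom_phi lam M T. F \<theta> \<le> F \<theta>s) \<and>
            (\<forall>\<theta>\<in>dom_phi lam M T. ereal (ell \<theta>) \<le> F \<theta>) \<and>
            (\<forall>\<theta>\<in>dom_phi lam M T. ell \<theta> / real N \<le> psi lam M T \<theta>s))"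
proof -
  let ?D = "dom_phi lam M T"
  define g where "g = (\<lambda>\<theta> x. eexp (coupling lam \<theta> (T x)))"
  define I where "I = (\<lambda>\<theta>. \<integral>x. g \<theta> x \<partial>M)"
  have ninf: "phi lam M T \<theta> \<noteq> -\<infinity>" for \<theta> using A by (simp add: assumption_A_def)
  have gm[measurable]: "g \<theta> \<in> borel_measurable M" for \<theta>
    unfolding g_def using T_meas by (rule g_meas)
  have gnn: "g \<theta> x \<ge> 0" for \<theta> x unfolding g_def by (rule g_nonneg)
  have gi: "integrable M (g \<theta>)" if "\<theta> \<in> ?D" for \<theta>
    unfolding g_def using phi_dom(1)[OF T_meas that ninf] .
  have Ipos: "I \<theta> > 0" if "\<theta> \<in> ?D" for \<theta>
    unfolding I_def g_def using phi_dom(2)[OF T_meas that ninf] .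
  have phieq: "phi lam M T \<theta> = ereal (ln (I \<theta>))" if "\<theta> \<in> ?D" for \<theta>
    unfolding I_def g_def using phi_dom(3)[OF T_meas that ninf] .
  have qd: "qdens lam M T \<theta> x = g \<theta> x / I \<theta>" if "\<theta> \<in> ?D" for \<theta> x
    unfolding g_def using qdens_eq[OF phieq[OF that] Ipos[OF that]] by (simp add: g_def)
  obtain S0 where S0: "\<And>\<theta>. \<theta> \<in> ?D \<Longrightarrow> supp lam T \<theta> = S0"
    using B unfolding assumption_B_def by blast
  have compat: "compatible lam M T (qdens lam M T \<theta>s) \<theta>s"
    using B \<theta>s_dom unfolding assumption_B_def family_compatible_def by blast
  have gS: "g \<theta> x = 0" if "\<theta> \<in> ?D" "x \<notin> S0" "lam \<noteq> 0" for \<theta> x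
    using S0[OF that(1)] that unfolding g_def supp_def g_formula by auto
  have restr_eq: "restr (qdens lam M T \<theta>s) (supp lam T \<theta>s) = qdens lam M T \<theta>s"
  proof
    fix x show "restr (qdens lam M T \<theta>s) (supp lam T \<theta>s) x = qdens lam M T \<theta>s x"
      using gS[OF \<theta>s_dom, of x] S0[OF \<theta>s_dom]
      by (cases "lam = 0") (auto simp: restr_def supp_def qd[OF \<theta>s_dom] indicator_def)
  qed
  define W where "W = (\<lambda>x. qdens lam M T \<theta>s x powr (1 - lam))"
  define Zs where "Zs = enn2real (\<integral>\<^sup>+ x. ennreal (W x) \<partial>M)"
  have Wm[measurable]: "W \<in> borel_measurable M"
    unfolding W_def qd[OF \<theta>s_dom] by measurable
  have Wnn: "W x \<ge> 0" for x unfolding W_def by simp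
  have c1: "0 < (\<integral>\<^sup>+ x. ennreal (W x) \<partial>M)" "(\<integral>\<^sup>+ x. ennreal (W x) \<partial>M) < \<infinity>"
    and c2: "\<forall>b\<in>Basis. integrable M (\<lambda>x. W x * (T x \<bullet> b))"
    using compat unfolding compatible_def Let_def restr_eq W_def by auto
  have Wi: "integrable M W"
    by (rule integrableI_nn_integral_finite[where x=Zs])
       (use c1 in \<open>auto simp: Zs_def Wnn ennreal_enn2real less_top\<close>)
  have WZ: "(\<integral>x. W x \<partial>M) = Zs"
    unfolding Zs_def by (rule integral_eq_nn_integral) (auto simp: Wnn)
  have Zpos: "Zs > 0" using c1 unfolding Zs_def
    by (simp add: enn2real_positive_iff less_top)
  have esc: "escort (1 - lam) M (qdens lam M T \<theta>s) = (\<lambda>x. W x / Zs)"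
    unfolding escort_def W_def Zs_def ..
  have mom: "expect M (\<lambda>x. W x / Zs) T = Tbar" using moment esc by simp
  have WTi: "integrable M (\<lambda>x. W x * (v \<bullet> T x))" for v
    using moment_lemma(1)[OF T_meas c2 mom Zpos] .
  have WT: "(\<integral>x. W x * (v \<bullet> T x) \<partial>M) = Zs * (v \<bullet> Tbar)" for v
    using moment_lemma(2)[OF T_meas c2 mom Zpos] .
  have TbarI: "v \<bullet> Tbar = (\<Sum>i<N. v \<bullet> T (xs i)) / real N" for v
    unfolding Tbar_def by (simp add: inner_sum_right)
  have P0: "\<forall>\<theta>\<in>?D. ell \<theta> \<le> ell \<theta>s" if l0: "lam = 0"
  proof
    fix \<theta> assume th: "\<theta> \<in> ?D"
    have gf: "g \<theta>' x = exp (\<theta>' \<bullet> T x)" for \<theta>' x unfolding g_def g_formula using l0 by simp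
    have Wq: "W x = g \<theta>s x / I \<theta>s" for x
      unfolding W_def qd[OF \<theta>s_dom] using gnn[of \<theta>s x] Ipos[OF \<theta>s_dom] by (simp add: l0)
    have Z1: "Zs = 1"
      using WZ Ipos[OF \<theta>s_dom] unfolding Wq by (simp add: I_def)
    define d where "d = \<theta> - \<theta>s"
    define t where "t = d \<bullet> Tbar"
    have pw: "g \<theta> x \<ge> exp t * g \<theta>s x + exp t * I \<theta>s * (W x * (d \<bullet> T x) - t * W x)" for x
    proof -
      have "exp (d \<bullet> T x - t) \<ge> 1 + (d \<bullet> T x - t)" by (rule exp_ge_add_one_self)
      then have "exp t * exp (d \<bullet> T x - t) \<ge> exp t * (1 + (d \<bullet> T x - t))" by simp
      then have "exp (d \<bullet> T x) \<ge> exp t * (1 + (d \<bullet> T x - t))" by (simp flip: exp_add)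
      then have "g \<theta>s x * exp (d \<bullet> T x) \<ge> g \<theta>s x * (exp t * (1 + (d \<bullet> T x - t)))"
        using gnn by (intro mult_left_mono) auto
      moreover have "g \<theta> x = g \<theta>s x * exp (d \<bullet> T x)"
        unfolding gf d_def by (simp add: inner_diff_left flip: exp_add)
      moreover have "exp t * g \<theta>s x + exp t * I \<theta>s * (W x * (d \<bullet> T x) - t * W x)
          = g \<theta>s x * (exp t * (1 + (d \<bullet> T x - t)))"
        unfolding Wq using Ipos[OF \<theta>s_dom] by (simp add: field_simps)
      ultimately show ?thesis by simp
    qed
    have "(\<integral>x. exp t * g \<theta>s x + exp t * I \<theta>s * (W x * (d \<bullet> T x) - t * W x) \<partial>M) \<le> (\<integral>x. g \<theta> x \<partial>M)"
      using pw gi[OF th] gi[OF \<theta>s_dom] WTi Wi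
      by (intro integral_mono) auto
    also have "\<dots> = I \<theta>" by (simp add: I_def)
    also have "(\<integral>x. exp t * g \<theta>s x + exp t * I \<theta>s * (W x * (d \<bullet> T x) - t * W x) \<partial>M)
        = exp t * I \<theta>s + exp t * I \<theta>s * (Zs * t - t * Zs)"
      using gi[OF \<theta>s_dom] WTi Wi WT WZ unfolding t_def I_def
      by (simp add: integral_add integral_diff)
    finally have "exp t * I \<theta>s \<le> I \<theta>" by simp
    then have "ln (exp t * I \<theta>s) \<le> ln (I \<theta>)"
      using Ipos[OF \<theta>s_dom] Ipos[OF th] by (subst ln_le_cancel_iff) auto
    then have key: "t + ln (I \<theta>s) \<le> ln (I \<theta>)"
      using Ipos[OF \<theta>s_dom] by (simp add: ln_mult)
    have ellf: "ell \<theta>' = real N * (\<theta>' \<bullet> Tbar - ln (I \<theta>'))" if "\<theta>' \<in> ?D" for \<theta>'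
    proof -
      have "ell \<theta>' = (\<Sum>i<N. \<theta>' \<bullet> T (xs i) - ln (I \<theta>'))"
        unfolding ell_def qd[OF that] using Ipos[OF that] by (simp add: ln_div gf)
      also have "\<dots> = real N * (\<theta>' \<bullet> Tbar - ln (I \<theta>'))"
        unfolding TbarI using N_pos by (simp add: sum_subtractf algebra_simps)
      finally show ?thesis .
    qed
    have "\<theta> \<bullet> Tbar - ln (I \<theta>) \<le> \<theta>s \<bullet> Tbar - ln (I \<theta>s)"
      using key unfolding t_def d_def by (simp add: inner_diff_left)
    then show "ell \<theta> \<le> ell \<theta>s"
      unfolding ellf[OF th] ellf[OF \<theta>s_dom] by (intro mult_left_mono) auto
  qed
  have PN: "\<exists>G. (\<forall>\<theta>\<in>?D. F \<theta> = ereal (real N * G \<theta>)) \<and> (\<forall>\<theta>\<in>?D. G \<theta> \<le> G \<theta>s)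
      \<and> (\<forall>\<theta>\<in>?D. lam < 0 \<longrightarrow> real N * G \<theta> \<le> ell \<theta>)
      \<and> (\<forall>\<theta>\<in>?D. lam > 0 \<longrightarrow> ell \<theta> \<le> real N * G \<theta>)
      \<and> psi lam M T \<theta>s = G \<theta>s" if ln0: "lam \<noteq> 0"
  proof -
    define p where "p = 1 / lam"
    define u where "u = (\<lambda>\<theta> x. 1 + lam * (\<theta> \<bullet> T x))"
    define a where "a = (\<lambda>\<theta>. 1 + lam * (\<theta> \<bullet> Tbar))"
    have pcond: "p \<ge> 1 \<or> p \<le> 0"
    proof (cases "lam < 0")
      case True then show ?thesis by (simp add: p_def divide_neg_pos)
    next
      case False then have "0 < lam" "lam < 1" using ln0 alpha_pos by auto
      then show ?thesis by (simp add: p_def)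
    qed
    have inS: "x \<in> S0 \<longleftrightarrow> u \<theta> x > 0" if "\<theta> \<in> ?D" for \<theta> x
      using S0[OF that] unfolding supp_def u_def by auto
    have gf: "g \<theta> x = (if x \<in> S0 then u \<theta> x powr p else 0)" if "\<theta> \<in> ?D" for \<theta> x
      using inS[OF that, of x] ln0 unfolding g_def g_formula u_def p_def by auto
    have pa: "p * (1 - lam) = p - 1" using ln0 by (simp add: p_def field_simps)
    have Is: "I \<theta>s > 0" using Ipos[OF \<theta>s_dom] .
    have Wf: "W x = (if x \<in> S0 then u \<theta>s x powr (p - 1) * I \<theta>s powr (-(1 - lam)) else 0)" for x
    proof (cases "x \<in> S0")
      case True
      then have up: "u \<theta>s x > 0" using inS[OF \<theta>s_dom] by auto
      have "W x = (u \<theta>s x powr p / I \<theta>s) powr (1 - lam)"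
        unfolding W_def qd[OF \<theta>s_dom] gf[OF \<theta>s_dom] using True by simp
      also have "\<dots> = u \<theta>s x powr (p - 1) * I \<theta>s powr (-(1 - lam))"
      proof -
        have m: "I \<theta>s powr (-(1 - lam)) = inverse (I \<theta>s powr (1 - lam))"
          by (rule powr_minus)
        have "(u \<theta>s x powr p / I \<theta>s) powr (1 - lam) = (u \<theta>s x powr p) powr (1 - lam) / I \<theta>s powr (1 - lam)"
          using up Is by (simp add: powr_divide)
        also have "(u \<theta>s x powr p) powr (1 - lam) = u \<theta>s x powr (p - 1)"
          by (simp add: powr_powr pa)
        finally show ?thesis unfolding m by (simp add: divide_inverse)
      qed
      finally show ?thesis using True by simp
    next
      case False then show ?thesis
        unfolding W_def qd[OF \<theta>s_dom] gf[OF \<theta>s_dom] using alpha_pos by simp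
    qed
    have WuT: "W x * u \<theta> x = W x + lam * (W x * (\<theta> \<bullet> T x))" for \<theta> x
      unfolding u_def by (simp add: algebra_simps)
    have intWu: "integrable M (\<lambda>x. W x * u \<theta> x)" for \<theta>
      unfolding WuT using Wi WTi by auto
    have I1: "(\<integral>x. W x * u \<theta> x \<partial>M) = Zs * a \<theta>" for \<theta>
      unfolding WuT using Wi WTi WT WZ by (simp add: a_def algebra_simps)
    have Wus: "W x * u \<theta>s x = g \<theta>s x * I \<theta>s powr (-(1 - lam))" for x
    proof (cases "x \<in> S0")
      case True
      then have up: "u \<theta>s x > 0" using inS[OF \<theta>s_dom] by auto
      have "u \<theta>s x powr (p - 1) * u \<theta>s x = u \<theta>s x powr p"
        using up by (simp add: powr_diff)
      then show ?thesis unfolding Wf gf[OF \<theta>s_dom] using True by (simp add: algebra_simps)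
    next
      case False then show ?thesis unfolding Wf gf[OF \<theta>s_dom] by simp
    qed
    have "Zs * a \<theta>s = (\<integral>x. g \<theta>s x * I \<theta>s powr (-(1 - lam)) \<partial>M)"
      unfolding I1[symmetric] Wus ..
    also have "\<dots> = I \<theta>s * I \<theta>s powr (-(1 - lam))" by (simp add: I_def)
    also have "\<dots> = I \<theta>s powr lam"
    proof -
      have "I \<theta>s powr lam = I \<theta>s powr (1 + (lam - 1))" by simp
      also have "\<dots> = I \<theta>s powr 1 * I \<theta>s powr (lam - 1)" by (rule powr_add)
      finally have "I \<theta>s powr lam = I \<theta>s powr 1 * I \<theta>s powr (lam - 1)" .
      then show ?thesis using Is by simp
    qed
    finally have Zas: "Zs * a \<theta>s = I \<theta>s powr lam" .
    have aspos: "a \<theta>s > 0"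
    proof -
      have "Zs * a \<theta>s > 0" using Zas Is by simp
      then show ?thesis using Zpos by (simp add: zero_less_mult_iff)
    qed
    have xsS: "xs i \<in> S0" if "i < N" for i
      using data_supp that S0[OF \<theta>s_dom] \<theta>s_dom by blast
    have asum: "a \<theta> = (\<Sum>i<N. u \<theta> (xs i)) / real N" for \<theta>
      unfolding a_def u_def TbarI using N_pos
      by (simp add: sum.distrib sum_distrib_left field_simps)
    have upos: "u \<theta> (xs i) > 0" if "\<theta> \<in> ?D" "i < N" for \<theta> i
      using inS[OF that(1)] xsS[OF that(2)] by auto
    have apos: "a \<theta> > 0" if "\<theta> \<in> ?D" for \<theta>
      unfolding asum using N_pos upos[OF that] by (intro divide_pos_pos sum_pos) auto
    define G where "G = (\<lambda>\<theta>. ln (a \<theta>) / lam - ln (I \<theta>))"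
    have FG: "F \<theta> = ereal (real N * G \<theta>)" if "\<theta> \<in> ?D" for \<theta>
    proof -
      have "coupling lam \<theta> Tbar = ereal (ln (a \<theta>) / lam)"
        using apos[OF that] ln0 unfolding coupling_def a_def by auto
      then show ?thesis unfolding F_def Tbar_def[symmetric] G_def phieq[OF that] by simp
    qed
    have Gmono: "G \<theta> \<le> G \<theta>s" if th: "\<theta> \<in> ?D" for \<theta>
    proof -
      define t where "t = a \<theta> / a \<theta>s"
      have tpos: "t > 0" using apos[OF th] aspos by (simp add: t_def)
      define C where "C = p * t powr (p - 1) * I \<theta>s powr (1 - lam)"
      have pw: "g \<theta> x \<ge> t powr p * g \<theta>s x + C * (W x * u \<theta> x - t * (W x * u \<theta>s x))" for x
      proof (cases "x \<in> S0")
        case True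
        have u1: "u \<theta> x > 0" "u \<theta>s x > 0" using True inS[OF th] inS[OF \<theta>s_dom] by auto
        have cancel: "I \<theta>s powr (1 - lam) * I \<theta>s powr (-(1 - lam)) = 1"
          using Is by (simp flip: powr_add)
        have Wx: "W x = u \<theta>s x powr (p - 1) * I \<theta>s powr (-(1 - lam))" using True Wf by simp
        have "C * (W x * u \<theta> x - t * (W x * u \<theta>s x))
            = p * t powr (p - 1) * u \<theta>s x powr (p - 1) * (u \<theta> x - t * u \<theta>s x)
              * (I \<theta>s powr (1 - lam) * I \<theta>s powr (-(1 - lam)))"
          unfolding C_def Wx by (simp add: algebra_simps)
        also have "\<dots> = p * t powr (p - 1) * u \<theta>s x powr (p - 1) * (u \<theta> x - t * u \<theta>s x)"
          unfolding cancel by simp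
        finally have Ceq: "C * (W x * u \<theta> x - t * (W x * u \<theta>s x))
            = p * t powr (p - 1) * u \<theta>s x powr (p - 1) * (u \<theta> x - t * u \<theta>s x)" .
        have gx: "g \<theta> x = u \<theta> x powr p" "g \<theta>s x = u \<theta>s x powr p"
          using True gf[OF th] gf[OF \<theta>s_dom] by auto
        show ?thesis unfolding gx Ceq using tangent_mult[OF pcond u1(1) u1(2) tpos] by linarith
      next
        case False
        then show ?thesis by (simp add: gf[OF th] gf[OF \<theta>s_dom] Wf)
      qed
      have "(\<integral>x. t powr p * g \<theta>s x + C * (W x * u \<theta> x - t * (W x * u \<theta>s x)) \<partial>M) \<le> (\<integral>x. g \<theta> x \<partial>M)"
        using pw gi[OF th] gi[OF \<theta>s_dom] intWu
        by (intro integral_mono) auto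
      also have "\<dots> = I \<theta>" by (simp add: I_def)
      also have "(\<integral>x. t powr p * g \<theta>s x + C * (W x * u \<theta> x - t * (W x * u \<theta>s x)) \<partial>M)
          = t powr p * I \<theta>s + C * (Zs * a \<theta> - t * (Zs * a \<theta>s))"
        using gi[OF \<theta>s_dom] intWu I1 by (simp add: I_def integral_add integral_diff)
      also have "\<dots> = t powr p * I \<theta>s"
        using aspos unfolding t_def by simp
      finally have "t powr p * I \<theta>s \<le> I \<theta>" .
      then have "ln (t powr p * I \<theta>s) \<le> ln (I \<theta>)"
        using Is Ipos[OF th] tpos by (subst ln_le_cancel_iff) auto
      then have "p * (ln (a \<theta>) - ln (a \<theta>s)) + ln (I \<theta>s) \<le> ln (I \<theta>)"
        using Is tpos apos[OF th] aspos by (simp add: ln_mult ln_powr t_def ln_div)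
      then show ?thesis unfolding G_def p_def by (simp add: diff_divide_distrib)
    qed
    have ellf: "ell \<theta> = (\<Sum>i<N. ln (u \<theta> (xs i))) / lam - real N * ln (I \<theta>)" if th: "\<theta> \<in> ?D" for \<theta>
    proof -
      have "ell \<theta> = (\<Sum>i<N. ln (u \<theta> (xs i)) / lam - ln (I \<theta>))"
        unfolding ell_def
      proof (rule sum.cong[OF refl])
        fix i assume "i \<in> {..<N}"
        then have i: "i < N" by simp
        show "ln (qdens lam M T \<theta> (xs i)) = ln (u \<theta> (xs i)) / lam - ln (I \<theta>)"
          unfolding qd[OF th] gf[OF th] using xsS[OF i] upos[OF th i] Ipos[OF th]
          by (simp add: ln_div ln_powr p_def)
      qed
      also have "\<dots> = (\<Sum>i<N. ln (u \<theta> (xs i))) / lam - real N * ln (I \<theta>)"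
        by (simp add: sum_subtractf sum_divide_distrib)
      finally show ?thesis .
    qed
    have jen: "(\<Sum>i<N. ln (u \<theta> (xs i))) \<le> real N * ln (a \<theta>)" if th: "\<theta> \<in> ?D" for \<theta>
      using ln_sum_le[of "{..<N}" "\<lambda>i. u \<theta> (xs i)"] N_pos upos[OF th] unfolding asum by auto
    have NG: "real N * G \<theta> = real N * ln (a \<theta>) / lam - real N * ln (I \<theta>)" for \<theta>
      unfolding G_def by (simp add: right_diff_distrib)
    have lneg: "real N * G \<theta> \<le> ell \<theta>" if th: "\<theta> \<in> ?D" and "lam < 0" for \<theta>
    proof -
      have "real N * ln (a \<theta>) / lam \<le> (\<Sum>i<N. ln (u \<theta> (xs i))) / lam"
        using divide_right_mono_neg[OF jen[OF th], of lam] \<open>lam < 0\<close> by simp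
      then show ?thesis unfolding ellf[OF th] NG by linarith
    qed
    have lpos: "ell \<theta> \<le> real N * G \<theta>" if th: "\<theta> \<in> ?D" and "lam > 0" for \<theta>
    proof -
      have "(\<Sum>i<N. ln (u \<theta> (xs i))) / lam \<le> real N * ln (a \<theta>) / lam"
        using jen[OF th] \<open>lam > 0\<close> by (intro divide_right_mono) auto
      then show ?thesis unfolding ellf[OF th] NG by linarith
    qed
    have "psi lam M T \<theta>s = - (ln Zs / lam)"
      unfolding psi_def renyi_def Zs_def W_def using ln0 by simp
    also have "\<dots> = G \<theta>s"
    proof -
      have "ln Zs + ln (a \<theta>s) = lam * ln (I \<theta>s)"
      proof -
        have "ln (Zs * a \<theta>s) = ln Zs + ln (a \<theta>s)" using Zpos aspos by (simp add: ln_mult)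
        moreover have "ln (I \<theta>s powr lam) = lam * ln (I \<theta>s)" using Is by (simp add: ln_powr)
        moreover have "ln (Zs * a \<theta>s) = ln (I \<theta>s powr lam)" using Zas by (rule arg_cong)
        ultimately show ?thesis by linarith
      qed
      then have "ln Zs = lam * ln (I \<theta>s) - ln (a \<theta>s)" by linarith
      then show ?thesis unfolding G_def using ln0 by (simp add: diff_divide_distrib)
    qed
    finally have psiG: "psi lam M T \<theta>s = G \<theta>s" .
    show ?thesis by (intro exI[of _ G]) (use FG Gmono lneg lpos psiG in auto)
  qed
  have PN': "\<exists>G. (\<forall>\<theta>\<in>?D. F \<theta> = ereal (real N * G \<theta>)) \<and> (\<forall>\<theta>\<in>?D. G \<theta> \<le> G \<theta>s)
      \<and> (\<forall>\<theta>\<in>?D. lam < 0 \<longrightarrow> real N * G \<theta> \<le> ell \<theta>)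
      \<and> (\<forall>\<theta>\<in>?D. lam > 0 \<longrightarrow> ell \<theta> \<le> real N * G \<theta>)
      \<and> psi lam M T \<theta>s = G \<theta>s" if "lam \<noteq> 0" using PN[OF that] .
  show ?thesis
  proof (intro conjI impI)
    assume "lam = 0" then show "\<forall>\<theta>\<in>?D. ell \<theta> \<le> ell \<theta>s" using P0 by blast
  next
    assume l: "lam < 0"
    then have "lam \<noteq> 0" by simp
    from PN'[OF this] obtain G where G1: "\<forall>\<theta>\<in>?D. F \<theta> = ereal (real N * G \<theta>)"
      and G2: "\<forall>\<theta>\<in>?D. G \<theta> \<le> G \<theta>s"
      and G3: "\<forall>\<theta>\<in>?D. lam < 0 \<longrightarrow> real N * G \<theta> \<le> ell \<theta>"
      and G4: "psi lam M T \<theta>s = G \<theta>s"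
      by blast
    show "\<forall>\<theta>\<in>?D. F \<theta> \<le> F \<theta>s"
    proof
      fix \<theta> assume th: "\<theta> \<in> ?D"
      have "real N * G \<theta> \<le> real N * G \<theta>s" using G2 th by (intro mult_left_mono) auto
      then show "F \<theta> \<le> F \<theta>s" using G1 th \<theta>s_dom by simp
    qed
    show "\<forall>\<theta>\<in>?D. F \<theta> \<le> ereal (ell \<theta>)"
    proof
      fix \<theta> assume th: "\<theta> \<in> ?D"
      show "F \<theta> \<le> ereal (ell \<theta>)" using G1 G3 th l by simp
    qed
    have "real N * G \<theta>s \<le> ell \<theta>s" using G3 l \<theta>s_dom by blast
    then show "psi lam M T \<theta>s \<le> ell \<theta>s / real N"
      unfolding G4 using N_pos by (simp add: field_simps)
  next
    assume l: "lam > 0"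
    then have "lam \<noteq> 0" by simp
    from PN'[OF this] obtain G where G1: "\<forall>\<theta>\<in>?D. F \<theta> = ereal (real N * G \<theta>)"
      and G2: "\<forall>\<theta>\<in>?D. G \<theta> \<le> G \<theta>s"
      and G3: "\<forall>\<theta>\<in>?D. lam > 0 \<longrightarrow> ell \<theta> \<le> real N * G \<theta>"
      and G4: "psi lam M T \<theta>s = G \<theta>s"
      by blast
    show "\<forall>\<theta>\<in>?D. F \<theta> \<le> F \<theta>s"
    proof
      fix \<theta> assume th: "\<theta> \<in> ?D"
      have "real N * G \<theta> \<le> real N * G \<theta>s" using G2 th by (intro mult_left_mono) auto
      then show "F \<theta> \<le> F \<theta>s" using G1 th \<theta>s_dom by simp
    qed
    show "\<forall>\<theta>\<in>?D. ereal (ell \<theta>) \<le> F \<theta>"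
    proof
      fix \<theta> assume th: "\<theta> \<in> ?D"
      show "ereal (ell \<theta>) \<le> F \<theta>" using G1 G3 th l by simp
    qed
    show "\<forall>\<theta>\<in>?D. ell \<theta> / real N \<le> psi lam M T \<theta>s"
    proof
      fix \<theta> assume th: "\<theta> \<in> ?D"
      have "real N * G \<theta> \<le> real N * G \<theta>s" using G2 th by (intro mult_left_mono) auto
      then have "ell \<theta> \<le> real N * G \<theta>s" using G3 l th by (meson order_trans)
      then show "ell \<theta> / real N \<le> psi lam M T \<theta>s"
        unfolding G4 using N_pos by (simp add: field_simps)
    qed
  qed
qed

end
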